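(* Let $\mathcal B$ be a building set on a finite set $S\subset\mathbb N$ of even cardinality. If $\mathcal B$ has a connected component of odd cardinality, then there is no alternating $\mathcal B$-permutation.
   Context: A building set on a finite set $S\subset\mathbb N$ is a collection $\mathcal B$ of nonempty subsets of $S$ containing every singleton $\{i\}$, $i\in S$, such that $I,J\in\mathcal B$ and $I\cap J\neq\emptyset$ imply $I\cup J\in\mathcal B$. Its connected components are the inclusion-maximal elements of $\mathcal B$. For $I\subseteq S$, $\mathcal B|_I=\{J\in\mathcal B:J\subseteq I\}$. For a building set $\mathcal B$ on $S$ with $|S|=m$, a $\mathcal B$-permutation is a sequence $(x_1x_2\cdots x_m)$ listing each element of $S$ exactly once such that for each $1\le i\le m$, $x_i$ and $\max\{x_1,\dots,x_i\}$ lie in the same connected component of $\mathcal B|_{\{x_1,\dots,x_i\}}$. It is alternating if $x_1>x_2<x_3>x_4<\cdots$. *)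

theory Defs
  imports Main
begin

definition building_set :: "nat set \<Rightarrow> nat set set \<Rightarrow> bool" where
  "building_set S B \<longleftrightarrow> finite S \<and>
     (\<forall>I\<in>B. I \<noteq> {} \<and> I \<subseteq> S) \<and>
     (\<forall>i\<in>S. {i} \<in> B) \<and>
     (\<forall>I\<in>B. \<forall>J\<in>B. I \<inter> J \<noteq> {} \<longrightarrow> I \<union> J \<in> B)"

definition connected_components :: "nat set set \<Rightarrow> nat set set" where
  "connected_components B = {I \<in> B. \<forall>J\<in>B. I \<subseteq> J \<longrightarrow> J = I}"

definition restrict_bs :: "nat set set \<Rightarrow> nat set \<Rightarrow> nat set set" where
  "restrict_bs B I = {J \<in> B. J \<subseteq> I}"

text \<open>B-permutation of S, as a list x_1 ... x_m (0-based list indices).\<close>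
definition B_permutation :: "nat set \<Rightarrow> nat set set \<Rightarrow> nat list \<Rightarrow> bool" where
  "B_permutation S B xs \<longleftrightarrow> distinct xs \<and> set xs = S \<and>
     (\<forall>i < length xs.
        \<exists>C \<in> connected_components (restrict_bs B (set (take (Suc i) xs))).
          xs ! i \<in> C \<and> Max (set (take (Suc i) xs)) \<in> C)"

text \<open>Alternating: x_1 > x_2 < x_3 > x_4 < ... ; with 0-based indices,
  xs!i > xs!(i+1) for even i and xs!i < xs!(i+1) for odd i.\<close>
definition alternating :: "nat list \<Rightarrow> bool" where
  "alternating xs \<longleftrightarrow> (\<forall>i. Suc i < length xs \<longrightarrow>
     (if even i then xs ! i > xs ! Suc i else xs ! i < xs ! Suc i))"

end

theory Submission
  imports Defs
begin

lemma pair_even: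
  assumes "distinct ys" "even (length ys)"
    and "\<forall>k. Suc (2*k) < length ys \<longrightarrow> (ys!(2*k) \<in> C \<longleftrightarrow> ys!Suc(2*k) \<in> C)"
  shows "even (card (C \<inter> set ys))"
  using assms
proof (induction ys rule: induct_list012)
  case 1 then show ?case by simp
next
  case (2 x) then show ?case by simp
next
  case (3 x y zs)
  have h: "\<forall>k. Suc (2*k) < length zs \<longrightarrow> (zs!(2*k) \<in> C \<longleftrightarrow> zs!Suc(2*k) \<in> C)"
  proof (intro allI impI)
    fix k assume "Suc (2*k) < length zs"
    with "3.prems"(3)[rule_format, of "Suc k"] show "(zs!(2*k) \<in> C \<longleftrightarrow> zs!Suc(2*k) \<in> C)"
      by simp
  qed
  have ez: "even (card (C \<inter> set zs))" using 3 h by simp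
  have xy: "x \<in> C \<longleftrightarrow> y \<in> C" using "3.prems"(3)[rule_format, of 0] by simp
  have eq: "C \<inter> set (x # y # zs) = (C \<inter> {x,y}) \<union> (C \<inter> set zs)" by auto
  have disj: "(C \<inter> {x,y}) \<inter> (C \<inter> set zs) = {}" using "3.prems"(1) by auto
  have "card (C \<inter> set (x # y # zs)) = card (C \<inter> {x,y}) + card (C \<inter> set zs)"
    unfolding eq by (rule card_Un_disjoint) (use disj in auto)
  moreover have "even (card (C \<inter> {x,y}))"
  proof (cases "x \<in> C")
    case True
    then have "C \<inter> {x,y} = {x,y}" using xy by auto
    moreover have "x \<noteq> y" using "3.prems"(1) by simp
    ultimately show ?thesis by simp
  next
    case False
    then have "C \<inter> {x,y} = {}" using xy by auto
    then show ?thesis by simp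
  qed
  ultimately show ?case using ez by simp
qed

theorem proposition4p2:
  fixes S :: "nat set" and B :: "nat set set"
  assumes "building_set S B"
    and "even (card S)"
    and "\<exists>C \<in> connected_components B. odd (card C)"
  shows "\<not> (\<exists>xs. B_permutation S B xs \<and> alternating xs)"
proof
  assume "\<exists>xs. B_permutation S B xs \<and> alternating xs"
  then obtain xs where bp: "B_permutation S B xs" and alt: "alternating xs" by blast
  obtain C where C: "C \<in> connected_components B" "odd (card C)" using assms(3) by blast
  have finS: "finite S" and BS: "\<forall>I\<in>B. I \<noteq> {} \<and> I \<subseteq> S"
    and un: "\<forall>I\<in>B. \<forall>J\<in>B. I \<inter> J \<noteq> {} \<longrightarrow> I \<union> J \<in> B"
    using assms(1) unfolding building_set_def by auto
  have finB: "finite B" proof (rule finite_subset)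
    show "B \<subseteq> Pow S" using BS by auto
  qed (use finS in simp)
  have ext: "\<exists>K\<in>connected_components B. J \<subseteq> K" if JB: "J \<in> B" for J
  proof -
    obtain m where "m \<in> B" "J \<subseteq> m" "\<forall>b\<in>B. m \<subseteq> b \<longrightarrow> m = b"
      using finite_has_maximal2[OF finB JB] by blast
    then show ?thesis unfolding connected_components_def by auto
  qed
  have same: "K1 = K2" if "K1 \<in> connected_components B" "K2 \<in> connected_components B"
    "K1 \<inter> K2 \<noteq> {}" for K1 K2
  proof -
    have "K1 \<in> B" "K2 \<in> B" using that unfolding connected_components_def by auto
    then have "K1 \<union> K2 \<in> B" using un that(3) by blast
    moreover have "K1 \<subseteq> K1 \<union> K2" "K2 \<subseteq> K1 \<union> K2" by auto
    ultimately have "K1 \<union> K2 = K1" "K1 \<union> K2 = K2"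
      using that(1,2) unfolding connected_components_def by auto
    then show ?thesis by simp
  qed
  have d: "distinct xs" and sx: "set xs = S" using bp unfolding B_permutation_def by auto
  have rel: "\<exists>K\<in>connected_components B. xs!i \<in> K \<and> Max (set (take (Suc i) xs)) \<in> K"
    if il: "i < length xs" for i
  proof -
    obtain C' where "C' \<in> connected_components (restrict_bs B (set (take (Suc i) xs)))"
      "xs ! i \<in> C'" "Max (set (take (Suc i) xs)) \<in> C'"
      using bp il unfolding B_permutation_def by auto
    moreover then have "C' \<in> B" unfolding connected_components_def restrict_bs_def by auto
    ultimately obtain K where "K\<in>connected_components B" "C' \<subseteq> K" using ext by blast
    then show ?thesis using \<open>xs ! i \<in> C'\<close> \<open>Max (set (take (Suc i) xs)) \<in> C'\<close> by blast
  qed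
  have pair: "xs!(2*k) \<in> C \<longleftrightarrow> xs!Suc(2*k) \<in> C" if kl: "Suc (2*k) < length xs" for k
  proof -
    let ?j = "2*k"
    have gt: "xs ! ?j > xs ! Suc ?j" using alt that unfolding alternating_def by auto
    have tk: "set (take (Suc (Suc ?j)) xs) = insert (xs!Suc ?j) (set (take (Suc ?j) xs))"
      using that by (simp add: take_Suc_conv_app_nth insert_commute)
    have mem: "xs ! ?j \<in> set (take (Suc ?j) xs)"
      using that by (simp add: take_Suc_conv_app_nth)
    have ge: "Max (set (take (Suc ?j) xs)) \<ge> xs ! ?j" using mem by simp
    then have M: "Max (set (take (Suc (Suc ?j)) xs)) = Max (set (take (Suc ?j) xs))"
      unfolding tk using gt mem ge by (subst Max_insert) (auto simp del: Max_ge simp add: max_def)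
    obtain K1 where K1: "K1 \<in> connected_components B" "xs!?j \<in> K1"
      "Max (set (take (Suc ?j) xs)) \<in> K1" using rel[of ?j] kl by auto
    obtain K2 where K2: "K2 \<in> connected_components B" "xs!Suc ?j \<in> K2"
      "Max (set (take (Suc ?j) xs)) \<in> K2" using rel[of "Suc ?j"] kl M by auto
    have "K1 = K2" using same[OF K1(1) K2(1)] K1(3) K2(3) by blast
    have "K1 = C" if "xs!?j \<in> C" using same[OF K1(1) C(1)] K1(2) that by blast
    moreover have "K2 = C" if "xs!Suc ?j \<in> C" using same[OF K2(1) C(1)] K2(2) that by blast
    ultimately show ?thesis using K1(2) K2(2) \<open>K1 = K2\<close> by auto
  qed
  have "even (length xs)" using assms(2) distinct_card[OF d] sx by simp
  then have "even (card (C \<inter> set xs))" by (rule pair_even[OF d]) (use pair in blast)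
  moreover have "C \<subseteq> S" using C BS unfolding connected_components_def by auto
  ultimately show False using C sx by (simp add: Int_absorb2)
qed

end
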